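(* Let $q$ be a prime power, let $\lambda \in \mathbb{F}_{q^n}\setminus\mathbb{F}_q$, $t = [\mathbb{F}_q(\lambda):\mathbb{F}_q]$, let $\overline{S}$ be an $\mathbb{F}_{q^t}$-subspace of $\mathbb{F}_{q^n}$ of $\mathbb{F}_{q^t}$-dimension $l>0$, let $b\in\mathbb{F}_{q^n}^*$ with $b\mathbb{F}_{q^t}\cap\overline{S}=\{0\}$, let $0<m<t$, $k = tl+m$, and let $S = \overline{S} \oplus b\langle 1, \lambda, \ldots, \lambda^{m-1}\rangle_{\mathbb{F}_q}$ (a $k$-dimensional $\mathbb{F}_q$-subspace). If $\alpha \in \mathbb{F}_{q^n}^*$ satisfies $\dim_{\mathbb{F}_{q^t}}(\overline{S} \cap \alpha\overline{S}) = i$, then $\dim_{\mathbb{F}_q}(S \cap \alpha S) \leq 2m + ti$. *)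

theory Defs
  imports "HOL-Computational_Algebra.Primes"
begin

definition subfield :: "'a::field set \<Rightarrow> bool" where
  "subfield K \<longleftrightarrow> 0 \<in> K \<and> 1 \<in> K \<and>
     (\<forall>x\<in>K. \<forall>y\<in>K. x + y \<in> K \<and> x * y \<in> K) \<and>
     (\<forall>x\<in>K. - x \<in> K \<and> inverse x \<in> K)"

definition gen_subfield :: "'a::field set \<Rightarrow> 'a set" where
  "gen_subfield A = \<Inter>{K. subfield K \<and> A \<subseteq> K}"

definition K_span :: "'a::field set \<Rightarrow> 'a set \<Rightarrow> 'a set" where
  "K_span K A = {\<Sum>x\<in>C. c x * x | C c. finite C \<and> C \<subseteq> A \<and> (\<forall>x\<in>C. c x \<in> K)}"

definition K_subspace :: "'a::field set \<Rightarrow> 'a set \<Rightarrow> bool" where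
  "K_subspace K V \<longleftrightarrow> 0 \<in> V \<and> (\<forall>x\<in>V. \<forall>y\<in>V. x + y \<in> V) \<and>
     (\<forall>c\<in>K. \<forall>x\<in>V. c * x \<in> V)"

definition K_indep :: "'a::field set \<Rightarrow> 'a set \<Rightarrow> bool" where
  "K_indep K B \<longleftrightarrow> (\<forall>C c. finite C \<and> C \<subseteq> B \<and> (\<forall>x\<in>C. c x \<in> K) \<and>
      (\<Sum>x\<in>C. c x * x) = 0 \<longrightarrow> (\<forall>x\<in>C. c x = 0))"

definition K_basis :: "'a::field set \<Rightarrow> 'a set \<Rightarrow> 'a set \<Rightarrow> bool" where
  "K_basis K V B \<longleftrightarrow> B \<subseteq> V \<and> K_indep K B \<and> K_span K B = V"

definition K_dim :: "'a::field set \<Rightarrow> 'a set \<Rightarrow> nat" where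
  "K_dim K V = card (SOME B. K_basis K V B)"

definition prime_power :: "nat \<Rightarrow> bool" where
  "prime_power q \<longleftrightarrow> (\<exists>p e. prime p \<and> e > 0 \<and> q = p ^ e)"

end

theory Submission imports Defs "HOL-Computational_Algebra.Polynomial" "HOL-Library.FuncSet"
begin


lemma subfield_pow_card:
  fixes K :: "'a::{field,finite} set"
  assumes K: "subfield K" and x: "x \<in> K"
  shows "x ^ card K = x"
proof (cases "x = 0")
  case True
  have "card K > 0" using K by (auto simp: subfield_def card_gt_0_iff)
  then show ?thesis using True by simp
next
  case False
  let ?K = "K - {0}"
  have cl: "\<And>y. y \<in> ?K \<Longrightarrow> x * y \<in> ?K" using K x False by (auto simp: subfield_def)
  have inj: "inj_on (\<lambda>y. x * y) ?K" using False by (auto simp: inj_on_def)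
  have sub: "(\<lambda>y. x * y) ` ?K \<subseteq> ?K" using cl by auto
  have eq: "(\<lambda>y. x * y) ` ?K = ?K"
    using inj sub by (simp add: card_image card_subset_eq)
  have "(\<Prod>y\<in>?K. y) = (\<Prod>y\<in>(\<lambda>y. x * y) ` ?K. y)" using eq by simp
  also have "\<dots> = (\<Prod>y\<in>?K. x * y)" using inj by (simp add: prod.reindex)
  also have "\<dots> = x ^ card ?K * (\<Prod>y\<in>?K. y)" by (simp add: prod.distrib)
  finally have "x ^ card ?K = 1"
    by (metis (no_types, lifting) DiffD2 mult_cancel_right1 prod_zero_iff finite singletonI)
  moreover have "card K = Suc (card ?K)" using K
    by (metis card_Suc_Diff1 finite subfield_def)
  ultimately show ?thesis by simp
qed

lemma subfield_subset:
  fixes Fq Fqt :: "'a::{field,finite} set"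
  assumes "subfield Fq" "subfield Fqt" "card Fq = q" "card Fqt = q ^ t" "t > 0"
  shows "Fq \<subseteq> Fqt"
proof
  fix x assume x: "x \<in> Fq"
  have q1: "q \<ge> 2"
  proof -
    have "{0,1} \<subseteq> Fq" using assms(1) by (auto simp: subfield_def)
    then have "card {0::'a,1} \<le> q" using assms(3) by (metis card_mono finite)
    then show ?thesis by simp
  qed
  have pw: "x ^ (q ^ k) = x" for k
  proof (induction k)
    case 0 then show ?case by simp
  next
    case (Suc k)
    have "x ^ (q ^ Suc k) = (x ^ (q ^ k)) ^ q" by (simp add: power_mult[symmetric] mult.commute)
    then show ?case using Suc subfield_pow_card[OF assms(1) x] assms(3) by simp
  qed
  let ?N = "q ^ t"
  have N: "?N \<ge> 2" using q1 assms(5)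
    by (metis One_nat_def Suc_1 Suc_le_eq dual_order.trans less_imp_le_nat one_less_power order_refl)
  define p :: "'a poly" where "p = monom 1 ?N + [:0, -1:]"
  have dp: "degree p = ?N" unfolding p_def
    using N by (subst degree_add_eq_left) (auto simp: degree_monom_eq)
  have p0: "p \<noteq> 0"
  proof
    assume "p = 0" with dp have "?N = 0" by simp
    with N show False by simp
  qed
  have pp: "poly p y = y ^ ?N - y" for y by (simp add: p_def poly_monom)
  have "Fqt \<subseteq> {y. poly p y = 0}" using subfield_pow_card[OF assms(2)] assms(4) pp by auto
  moreover have "card {y. poly p y = 0} \<le> card Fqt" using card_poly_roots_bound[OF p0] dp assms(4) by simp
  ultimately have "Fqt = {y. poly p y = 0}" by (simp add: card_seteq)
  then show "x \<in> Fqt" using pw[of t] pp by auto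
qed



lemma subfield_facts:
  assumes "subfield K"
  shows "0 \<in> K" "1 \<in> K" "\<And>x y. x \<in> K \<Longrightarrow> y \<in> K \<Longrightarrow> x + y \<in> K"
    "\<And>x y. x \<in> K \<Longrightarrow> y \<in> K \<Longrightarrow> x * y \<in> K"
    "\<And>x. x \<in> K \<Longrightarrow> - x \<in> K" "\<And>x. x \<in> K \<Longrightarrow> inverse x \<in> K"
  using assms unfolding subfield_def by simp_all

lemma subfield_diff: "subfield K \<Longrightarrow> x \<in> K \<Longrightarrow> y \<in> K \<Longrightarrow> x - y \<in> K"
  unfolding diff_conv_add_uminus by (intro subfield_facts(3,5)) simp_all

lemma span_fin:
  fixes K :: "'a::field set"
  assumes A: "finite A" and K0: "0 \<in> K"
  shows "K_span K A = (\<lambda>d. \<Sum>x\<in>A. d x * x) ` (A \<rightarrow>\<^sub>E K)"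
proof
  show "K_span K A \<subseteq> (\<lambda>d. \<Sum>x\<in>A. d x * x) ` (A \<rightarrow>\<^sub>E K)"
  proof
    fix v assume "v \<in> K_span K A"
    then obtain C c where C: "finite C" "C \<subseteq> A" "\<forall>x\<in>C. c x \<in> K" and v: "v = (\<Sum>x\<in>C. c x * x)"
      unfolding K_span_def by blast
    define d where "d = (\<lambda>x. if x \<in> A then (if x \<in> C then c x else 0) else undefined)"
    have d: "d \<in> A \<rightarrow>\<^sub>E K" using C K0 by (auto simp: d_def)
    have "(\<Sum>x\<in>A. d x * x) = (\<Sum>x\<in>C. c x * x)"
      by (rule sum.mono_neutral_cong_right) (use A C in \<open>auto simp: d_def\<close>)
    then show "v \<in> (\<lambda>d. \<Sum>x\<in>A. d x * x) ` (A \<rightarrow>\<^sub>E K)" using d v by force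
  qed
next
  show "(\<lambda>d. \<Sum>x\<in>A. d x * x) ` (A \<rightarrow>\<^sub>E K) \<subseteq> K_span K A"
    using A unfolding K_span_def by (auto simp: PiE_def Pi_def)
qed

lemma sum_in_subspace:
  fixes K :: "'a::field set"
  assumes V: "K_subspace K V" and C: "finite C" and h: "\<forall>x\<in>C. c x \<in> K \<and> x \<in> V"
  shows "(\<Sum>x\<in>C. c x * x) \<in> V"
  using C h
proof (induction C rule: finite_induct)
  case empty then show ?case using V by (simp add: K_subspace_def)
next
  case (insert a C)
  then show ?case using V by (simp add: K_subspace_def)
qed

lemma card_basis:
  fixes K :: "'a::{field,finite} set"
  assumes K: "subfield K" and B: "K_basis K V B"
  shows "card V = card K ^ card B"
proof -
  have K0: "0 \<in> K" using K by (simp add: subfield_def)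
  have V: "V = (\<lambda>d. \<Sum>x\<in>B. d x * x) ` (B \<rightarrow>\<^sub>E K)"
  proof -
    from B have "K_span K B = V" unfolding K_basis_def by blast
    then show ?thesis using span_fin[OF finite K0, of B] by simp
  qed
  have inj: "inj_on (\<lambda>d. \<Sum>x\<in>B. d x * x) (B \<rightarrow>\<^sub>E K)"
  proof (rule inj_onI)
    fix d1 d2 assume d1: "d1 \<in> B \<rightarrow>\<^sub>E K" and d2: "d2 \<in> B \<rightarrow>\<^sub>E K"
      and eq: "(\<Sum>x\<in>B. d1 x * x) = (\<Sum>x\<in>B. d2 x * x)"
    have s0: "(\<Sum>x\<in>B. (d1 x - d2 x) * x) = 0"
      using eq unfolding left_diff_distrib sum_subtractf by simp
    have inK: "\<forall>x\<in>B. d1 x - d2 x \<in> K"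
    proof
      fix x assume "x \<in> B"
      then have "d1 x \<in> K" "d2 x \<in> K" using d1 d2 by (auto dest: PiE_mem)
      then show "d1 x - d2 x \<in> K" using K by (rule subfield_diff[rotated])
    qed
    have "K_indep K B" using B unfolding K_basis_def by blast
    then have imp: "finite B \<and> B \<subseteq> B \<and> (\<forall>x\<in>B. d1 x - d2 x \<in> K) \<and> (\<Sum>x\<in>B. (d1 x - d2 x) * x) = 0
       \<longrightarrow> (\<forall>x\<in>B. d1 x - d2 x = 0)"
      unfolding K_indep_def
      apply -
      apply (drule spec[where x=B])
      apply (drule spec[where x="\<lambda>x. d1 x - d2 x"])
      apply assumption
      done
    have "\<forall>x\<in>B. d1 x - d2 x = 0"
      by (rule mp[OF imp]) (intro conjI finite subset_refl inK s0)
    then have "\<forall>x\<in>B. d1 x = d2 x" by simp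
    then show "d1 = d2" using PiE_ext[OF d1 d2] by blast
  qed
  have "card V = card (B \<rightarrow>\<^sub>E K)" using inj by (subst V) (rule card_image)
  also have "\<dots> = card K ^ card B" unfolding card_PiE[OF finite] prod_constant ..
  finally show ?thesis .
qed

lemma indepD:
  assumes "K_indep K B" "finite C" "C \<subseteq> B" "\<forall>x\<in>C. c x \<in> K" "(\<Sum>x\<in>C. c x * x) = 0" "x \<in> C"
  shows "c x = 0"
proof -
  have "finite C \<and> C \<subseteq> B \<and> (\<forall>x\<in>C. c x \<in> K) \<and> (\<Sum>x\<in>C. c x * x) = 0 \<longrightarrow> (\<forall>x\<in>C. c x = 0)"
    using assms(1) unfolding K_indep_def
    apply -
    apply (drule spec[where x=C])
    apply (drule spec[where x=c])
    apply assumption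
    done
  then show ?thesis using assms(2-6) by blast
qed

lemma spanI:
  assumes "finite C" "C \<subseteq> A" "\<forall>x\<in>C. c x \<in> K" "v = (\<Sum>x\<in>C. c x * x)"
  shows "v \<in> K_span K A"
  unfolding K_span_def
  apply (rule CollectI)
  apply (rule exI[of _ C])
  apply (rule exI[of _ c])
  using assms by blast

lemma spanE:
  assumes "v \<in> K_span K A"
  obtains C c where "finite C" "C \<subseteq> A" "\<forall>x\<in>C. c x \<in> K" "v = (\<Sum>x\<in>C. c x * x)"
  using assms unfolding K_span_def by blast

lemma basis_exists:
  fixes K :: "'a::{field,finite} set"
  assumes K: "subfield K" and V: "K_subspace K V"
  shows "\<exists>B. K_basis K V B"
proof -
  let ?P = "\<lambda>n. \<exists>B. B \<subseteq> V \<and> K_indep K B \<and> card B = n"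
  have P0: "?P 0" by (rule exI[of _ "{}"]) (auto simp: K_indep_def V[unfolded K_subspace_def])
  have "\<forall>n. ?P n \<longrightarrow> n \<le> card (UNIV :: 'a set)" using card_mono[OF finite subset_UNIV] by blast
  from Nat.ex_has_greatest_nat[OF P0 this] obtain n where "?P n" and mx: "\<forall>k. ?P k \<longrightarrow> k \<le> n" by blast
  then obtain B where BV: "B \<subseteq> V" and ind: "K_indep K B" and cB: "card B = n" by blast
  have K0: "0 \<in> K" and K1: "1 \<in> K" using subfield_facts[OF K] by blast+
  have "K_span K B \<subseteq> V"
  proof
    fix w assume "w \<in> K_span K B"
    then obtain C c where C: "finite C" "C \<subseteq> B" "\<forall>x\<in>C. c x \<in> K" "w = (\<Sum>x\<in>C. c x * x)"
      by (rule spanE)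
    have "\<forall>x\<in>C. c x \<in> K \<and> x \<in> V" using C BV by blast
    then show "w \<in> V" using sum_in_subspace[OF V C(1)] C(4) by simp
  qed
  moreover have "V \<subseteq> K_span K B"
  proof
    fix v assume v: "v \<in> V"
    show "v \<in> K_span K B"
    proof (rule ccontr)
      assume ns: "v \<notin> K_span K B"
      have vB: "v \<notin> B"
      proof
        assume "v \<in> B"
        then have "v = (\<Sum>x\<in>{v}. 1 * x)" "{v} \<subseteq> B" by auto
        then have "v \<in> K_span K B" using K1 by (intro spanI[of "{v}" B "\<lambda>_. 1"]) auto
        then show False using ns by blast
      qed
      have "K_indep K (insert v B)"
        unfolding K_indep_def
      proof (intro allI impI)
        fix C c assume h: "finite C \<and> C \<subseteq> insert v B \<and> (\<forall>x\<in>C. c x \<in> K) \<and> (\<Sum>x\<in>C. c x * x) = 0"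
        show "\<forall>x\<in>C. c x = 0"
        proof (cases "v \<in> C")
          case False
          then have "C \<subseteq> B" using h by auto
          then show ?thesis using h indepD[OF ind] by blast
        next
          case True
          have split: "(\<Sum>x\<in>C. c x * x) = c v * v + (\<Sum>x\<in>C - {v}. c x * x)"
            using True h by (simp add: sum.remove)
          have CB: "C - {v} \<subseteq> B" using h by auto
          have cv: "c v = 0"
          proof (rule ccontr)
            assume cv: "c v \<noteq> 0"
            have "v = (\<Sum>x\<in>C - {v}. (- inverse (c v) * c x) * x)"
            proof -
              have "c v * v = - (\<Sum>x\<in>C - {v}. c x * x)" using split h by (simp add: eq_neg_iff_add_eq_0)
              have "v = inverse (c v) * (c v * v)" using cv by simp
              also have "\<dots> = - inverse (c v) * (\<Sum>x\<in>C - {v}. c x * x)"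
                by (subst \<open>c v * v = _\<close>) simp
              finally have "v = - inverse (c v) * (\<Sum>x\<in>C - {v}. c x * x)" .
              then show ?thesis by (simp add: sum_distrib_left mult.assoc)
            qed
            moreover have "\<forall>x\<in>C - {v}. - inverse (c v) * c x \<in> K"
              using h True subfield_facts[OF K] by simp
            ultimately have "v \<in> K_span K B" 
              using CB h by (intro spanI[of "C - {v}" B "\<lambda>x. - inverse (c v) * c x"]) auto
            then show False using ns by blast
          qed
          then have "(\<Sum>x\<in>C - {v}. c x * x) = 0" using split h by simp
          then have "\<forall>x\<in>C - {v}. c x = 0" using indepD[OF ind _ CB] h by blast
          then show ?thesis using cv by auto
        qed
      qed
      moreover have "insert v B \<subseteq> V" using BV v by auto
      moreover have "card (insert v B) = Suc n" using vB cB by simp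
      ultimately have "Suc n \<le> n" using mx by blast
      then show False by simp
    qed
  qed
  ultimately show ?thesis using BV ind unfolding K_basis_def by blast
qed

lemma card_dim:
  fixes K :: "'a::{field,finite} set"
  assumes K: "subfield K" and V: "K_subspace K V"
  shows "card V = card K ^ K_dim K V"
proof -
  have "K_basis K V (SOME B. K_basis K V B)" using basis_exists[OF K V] by (rule someI_ex)
  then show ?thesis using card_basis[OF K] unfolding K_dim_def by blast
qed



lemma subspace_mono: "K_subspace L V \<Longrightarrow> K \<subseteq> L \<Longrightarrow> K_subspace K V"
  unfolding K_subspace_def by blast

lemma span_subspace:
  fixes K :: "'a::field set"
  assumes K: "subfield K" and A: "finite A"
  shows "K_subspace K (K_span K A)"
proof -
  have K0: "0 \<in> K" using subfield_facts[OF K] by blast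
  note sp = span_fin[OF A K0]
  show ?thesis unfolding K_subspace_def
  proof (intro conjI ballI)
    show "0 \<in> K_span K A" by (rule spanI[of "{}"]) auto
  next
    fix x y assume "x \<in> K_span K A" "y \<in> K_span K A"
    then obtain d1 d2 where d: "d1 \<in> A \<rightarrow>\<^sub>E K" "d2 \<in> A \<rightarrow>\<^sub>E K"
      and x: "x = (\<Sum>z\<in>A. d1 z * z)" and y: "y = (\<Sum>z\<in>A. d2 z * z)" unfolding sp by blast
    have "x + y = (\<Sum>z\<in>A. (d1 z + d2 z) * z)" unfolding x y by (simp add: distrib_right sum.distrib)
    moreover have "\<forall>z\<in>A. d1 z + d2 z \<in> K" using d subfield_facts(3)[OF K] by (auto dest: PiE_mem)
    ultimately show "x + y \<in> K_span K A" by (intro spanI[OF A subset_refl]) auto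
  next
    fix c x assume c: "c \<in> K" and "x \<in> K_span K A"
    then obtain d1 where d: "d1 \<in> A \<rightarrow>\<^sub>E K"
      and x: "x = (\<Sum>z\<in>A. d1 z * z)" unfolding sp by blast
    have "c * x = (\<Sum>z\<in>A. (c * d1 z) * z)" unfolding x by (simp add: sum_distrib_left mult.assoc)
    moreover have "\<forall>z\<in>A. c * d1 z \<in> K" using d c subfield_facts(4)[OF K] by (auto dest: PiE_mem)
    ultimately show "c * x \<in> K_span K A" by (intro spanI[OF A subset_refl]) auto
  qed
qed

lemma card_span_le:
  fixes K :: "'a::field set"
  assumes K0: "0 \<in> K" and A: "finite A" and fK: "finite K"
  shows "card (K_span K A) \<le> card K ^ card A"
proof -
  have "card (K_span K A) \<le> card (A \<rightarrow>\<^sub>E K)" unfolding span_fin[OF A K0]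
    by (rule card_image_le) (simp add: A fK finite_PiE)
  also have "\<dots> = card K ^ card A" unfolding card_PiE[OF A] prod_constant ..
  finally show ?thesis .
qed

lemma sum_subspace:
  assumes U: "K_subspace K U" and Y: "K_subspace K Y"
  shows "K_subspace K {s + y | s y. s \<in> U \<and> y \<in> Y}"
  unfolding K_subspace_def
proof (intro conjI ballI)
  show "0 \<in> {s + y | s y. s \<in> U \<and> y \<in> Y}" using U Y unfolding K_subspace_def by force
next
  fix a b assume "a \<in> {s + y | s y. s \<in> U \<and> y \<in> Y}" "b \<in> {s + y | s y. s \<in> U \<and> y \<in> Y}"
  then obtain s1 y1 s2 y2 where "a = s1 + y1" "b = s2 + y2" "s1 \<in> U" "s2 \<in> U" "y1 \<in> Y" "y2 \<in> Y" by blast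
  moreover have "s1 + y1 + (s2 + y2) = (s1 + s2) + (y1 + y2)" by (simp add: algebra_simps)
  ultimately show "a + b \<in> {s + y | s y. s \<in> U \<and> y \<in> Y}" using U Y unfolding K_subspace_def by blast
next
  fix c a assume c: "c \<in> K" and "a \<in> {s + y | s y. s \<in> U \<and> y \<in> Y}"
  then obtain s1 y1 where "a = s1 + y1" "s1 \<in> U" "y1 \<in> Y" by blast
  moreover have "c * (s1 + y1) = c * s1 + c * y1" by (simp add: algebra_simps)
  ultimately show "c * a \<in> {s + y | s y. s \<in> U \<and> y \<in> Y}" using U Y c unfolding K_subspace_def by blast
qed

lemma scale_subspace:
  fixes \<alpha> :: "'a::field"
  assumes V: "K_subspace K V"
  shows "K_subspace K ((\<lambda>x. \<alpha> * x) ` V)"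
  unfolding K_subspace_def
proof (intro conjI ballI)
  show "0 \<in> (\<lambda>x. \<alpha> * x) ` V" using V unfolding K_subspace_def by force
next
  fix a b assume "a \<in> (\<lambda>x. \<alpha> * x) ` V" "b \<in> (\<lambda>x. \<alpha> * x) ` V"
  then obtain x y where "a = \<alpha> * x" "b = \<alpha> * y" "x \<in> V" "y \<in> V" by blast
  moreover have "\<alpha> * x + \<alpha> * y = \<alpha> * (x + y)" by (simp add: algebra_simps)
  ultimately show "a + b \<in> (\<lambda>x. \<alpha> * x) ` V" using V unfolding K_subspace_def by auto
next
  fix c a assume c: "c \<in> K" and "a \<in> (\<lambda>x. \<alpha> * x) ` V"
  then obtain x where "a = \<alpha> * x" "x \<in> V" by blast
  moreover have "c * (\<alpha> * x) = \<alpha> * (c * x)" by (simp add: algebra_simps)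
  ultimately show "c * a \<in> (\<lambda>x. \<alpha> * x) ` V" using V c unfolding K_subspace_def by auto
qed

lemma inter_subspace: "K_subspace K V \<Longrightarrow> K_subspace K W \<Longrightarrow> K_subspace K (V \<inter> W)"
  unfolding K_subspace_def by blast

lemma subspace_diff:
  assumes K: "subfield K" and V: "K_subspace K V" and x: "x \<in> V" and y: "y \<in> V"
  shows "x - y \<in> V"
proof -
  have "- 1 \<in> K" using subfield_facts[OF K] by blast
  then have "(- 1) * y \<in> V" using V y unfolding K_subspace_def by blast
  then have "x + (- 1) * y \<in> V" using V x unfolding K_subspace_def by blast
  then show ?thesis by simp
qed


theorem lemma4p5:
  fixes q n t l m i :: nat
    and Fq Fqt Sbar S :: "'a::{field,finite} set"
    and lam b \<alpha> :: 'a
  assumes "prime_power q"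
    and "card (UNIV :: 'a set) = q ^ n"
    and "subfield Fq" and "card Fq = q"
    and "lam \<notin> Fq"
    and "t = K_dim Fq (gen_subfield (Fq \<union> {lam}))"
    and "subfield Fqt" and "card Fqt = q ^ t"
    and "K_subspace Fqt Sbar" and "K_dim Fqt Sbar = l" and "l > 0"
    and "b \<noteq> 0" and "((\<lambda>x. b * x) ` Fqt) \<inter> Sbar = {0}"
    and "0 < m" and "m < t"
    and "S = {s + y | s y. s \<in> Sbar \<and> y \<in> K_span Fq ((\<lambda>j. b * lam ^ j) ` {..<m})}"
    and "\<alpha> \<noteq> 0"
    and "K_dim Fqt (Sbar \<inter> ((\<lambda>x. \<alpha> * x) ` Sbar)) = i"
  shows "K_dim Fq (S \<inter> ((\<lambda>x. \<alpha> * x) ` S)) \<le> 2 * m + t * i"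
proof -
  note Fq = assms(3) and Fqt = assms(7) and Sb = assms(9)
  have q2: "q \<ge> 2"
  proof -
    have "{0,1} \<subseteq> Fq" using subfield_facts[OF Fq] by blast
    then have "card {0::'a,1} \<le> q" using assms(4) by (metis card_mono finite)
    then show ?thesis by simp
  qed
  have sub: "Fq \<subseteq> Fqt" using subfield_subset[OF Fq Fqt assms(4) assms(8)] assms(15) by simp
  have SbFq: "K_subspace Fq Sbar" using subspace_mono[OF Sb sub] .
  define A where "A = (\<lambda>j. b * lam ^ j) ` {..<m}"
  define Y where "Y = K_span Fq A"
  have SY: "S = {s + y | s y. s \<in> Sbar \<and> y \<in> Y}" using assms(16) unfolding Y_def A_def .
  have YFq: "K_subspace Fq Y" unfolding Y_def by (rule span_subspace[OF Fq finite])
  have cA: "card A \<le> m" unfolding A_def using card_image_le[of "{..<m}"] by simp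
  have cY: "card Y \<le> q ^ m"
  proof -
    have "card Y \<le> card Fq ^ card A" unfolding Y_def
      by (rule card_span_le) (use subfield_facts[OF Fq] in auto)
    also have "\<dots> \<le> q ^ m" using assms(4) cA q2 by (simp add: power_increasing)
    finally show ?thesis .
  qed
  have SFq: "K_subspace Fq S" unfolding SY by (rule sum_subspace[OF SbFq YFq])
  define W where "W = S \<inter> (\<lambda>x. \<alpha> * x) ` S"
  define I where "I = Sbar \<inter> (\<lambda>x. \<alpha> * x) ` Sbar"
  have WFq: "K_subspace Fq W" unfolding W_def by (intro inter_subspace SFq scale_subspace)
  have aSb: "K_subspace Fqt ((\<lambda>x. \<alpha> * x) ` Sbar)" by (rule scale_subspace[OF Sb])
  have IFqt: "K_subspace Fqt I" unfolding I_def by (intro inter_subspace Sb aSb)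
  have cW: "card W = q ^ K_dim Fq W" using card_dim[OF Fq WFq] assms(4) by simp
  have cI: "card I = q ^ (t * i)" using card_dim[OF Fqt IFqt] assms(8) assms(18)
    unfolding I_def by (simp add: power_mult)
  define T where "T = (\<lambda>(y, y'). {w \<in> W. w - y \<in> Sbar \<and> w - \<alpha> * y' \<in> (\<lambda>x. \<alpha> * x) ` Sbar})"
  have cover: "W \<subseteq> (\<Union>p\<in>Y \<times> Y. T p)"
  proof
    fix w assume w: "w \<in> W"
    then have "w \<in> S" unfolding W_def by blast
    then obtain s y where s: "s \<in> Sbar" "y \<in> Y" "w = s + y" unfolding SY by blast
    from w have "w \<in> (\<lambda>x. \<alpha> * x) ` S" unfolding W_def by blast
    then obtain s' y' where s': "s' \<in> Sbar" "y' \<in> Y" "w = \<alpha> * (s' + y')" unfolding SY by blast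
    have "w - y \<in> Sbar" using s by simp
    moreover have "w - \<alpha> * y' = \<alpha> * s'" using s' by (simp add: algebra_simps)
    ultimately have "w \<in> T (y, y')" using w s' unfolding T_def by auto
    then show "w \<in> (\<Union>p\<in>Y \<times> Y. T p)" using s s' by blast
  qed
  have cT: "card (T p) \<le> card I" for p
  proof (cases "T p = {}")
    case True then show ?thesis by simp
  next
    case False
    obtain y y' where p: "p = (y, y')" by (cases p)
    from False obtain w0 where w0: "w0 \<in> T p" by blast
    have "(\<lambda>w. w - w0) ` T p \<subseteq> I"
    proof
      fix z assume "z \<in> (\<lambda>w. w - w0) ` T p"
      then obtain w where w: "w \<in> T p" "z = w - w0" by blast
      have f: "w - y \<in> Sbar" "w0 - y \<in> Sbar" "w - \<alpha> * y' \<in> (\<lambda>x. \<alpha> * x) ` Sbar"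
        "w0 - \<alpha> * y' \<in> (\<lambda>x. \<alpha> * x) ` Sbar"
        using w(1) w0 unfolding p T_def by auto
      have m1: "(w - y) - (w0 - y) \<in> Sbar" by (rule subspace_diff[OF Fqt Sb f(1,2)])
      have m2: "(w - \<alpha> * y') - (w0 - \<alpha> * y') \<in> (\<lambda>x. \<alpha> * x) ` Sbar"
        by (rule subspace_diff[OF Fqt aSb f(3,4)])
      have e1: "z = (w - y) - (w0 - y)" using w(2) by simp
      have e2: "z = (w - \<alpha> * y') - (w0 - \<alpha> * y')" using w(2) by simp
      show "z \<in> I" unfolding I_def
        by (rule IntI) (subst e1, rule m1, subst e2, rule m2)
    qed
    moreover have "inj_on (\<lambda>w. w - w0) (T p)" by (auto simp: inj_on_def)
    ultimately show ?thesis by (intro card_inj_on_le) auto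
  qed
  have "card W \<le> card (\<Union>p\<in>Y \<times> Y. T p)" using cover by (intro card_mono) auto
  also have "\<dots> \<le> (\<Sum>p\<in>Y \<times> Y. card (T p))" by (rule card_UN_le) (rule finite)
  also have "\<dots> \<le> of_nat (card (Y \<times> Y)) * card I" by (rule sum_bounded_above) (rule cT)
  also have "\<dots> = card Y * card Y * card I" unfolding card_cartesian_product by simp
  also have "\<dots> \<le> (q ^ m * q ^ m) * q ^ (t * i)" unfolding cI
    by (rule mult_le_mono1[OF mult_le_mono[OF cY cY]])
  also have "\<dots> = q ^ (2 * m + t * i)" by (simp add: power_add mult_2)
  finally have "q ^ K_dim Fq W \<le> q ^ (2 * m + t * i)" unfolding cW .
  then have "K_dim Fq W \<le> 2 * m + t * i" by (rule power_le_imp_le_exp[rotated]) (use q2 in simp)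
  then show ?thesis unfolding W_def .
qed

end
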